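(* Let $(M,\phi,\xi,\eta,g)$ be a $(2n+1)$-dimensional almost contact metric manifold and $(\bar M,\bar J,\bar g)$ the corresponding almost Hermitian manifold on $M\times\mathbb R$. Then $\bar R(\bar X,\bar Y,\bar Z,\bar W)=\bar R(\bar X,\bar Y,\bar J\bar Z,\bar J\bar W)$ for all vector fields $\bar X,\bar Y,\bar Z,\bar W$ on $\bar M$ if and only if, for all indices $i,j,k,l$, $$R_{ijkl}-\phi_k{}^c\phi_l{}^dR_{ijcd}=g_{il}g_{jk}-g_{jl}g_{ik}-\phi_{il}\phi_{jk}+\phi_{jl}\phi_{ik}\quad\text{and}\quad \xi^c\phi_l{}^dR_{ijcd}=\eta_i\phi_{jl}-\eta_j\phi_{il}.$$
   Context: An almost contact metric manifold $(M,\phi,\xi,\eta,g)$ of dimension $2n+1$: $\phi$ a $(1,1)$-tensor, $\xi$ a vector field, $\eta$ a 1-form, $g$ a Riemannian metric with $\phi^2X=-X+\eta(X)\xi$, $\phi\xi=0$, $\eta\circ\phi=0$, $\eta(\xi)=1$, $g(\phi X,\phi Y)=g(X,Y)-\eta(X)\eta(Y)$, $\eta(X)=g(\xi,X)$. The corresponding almost Hermitian manifold is $\bar M=M\times\mathbb R$ with $\bar JX=\phi X-\eta(X)\partial_t$, $\bar J\partial_t=\xi$, $\bar g(X,Y)=e^{-2t}g(X,Y)$, $\bar g(\partial_t,\partial_t)=e^{-2t}$, $\bar g(X,\partial_t)=0$ for $X,Y$ tangent to $M$. Curvature conventions: $R(X,Y)Z=[\nabla_X,\nabla_Y]Z-\nabla_{[X,Y]}Z$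 for the Levi-Civita connection, $\bar R(\bar X,\bar Y,\bar Z,\bar W)=\bar g(\bar R(\bar X,\bar Y)\bar Z,\bar W)$, and in local coordinates on $M$, $R_{ijkl}=g(R(\partial_i,\partial_j)\partial_k,\partial_l)$, $\phi\partial_j=\phi_j{}^i\partial_i$, $\phi_{ij}=g_{aj}\phi_i{}^a$, $\eta_i=g_{ij}\xi^j$, with summation over repeated indices. *)

theory Defs
  imports "HOL-Analysis.Analysis"
begin

definition cpartial :: "'m::finite \<Rightarrow> (real^'m \<Rightarrow> real) \<Rightarrow> real^'m \<Rightarrow> real" where
  "cpartial i f p = deriv (\<lambda>t. f (p + t *\<^sub>R axis i 1)) 0"

fun cpartials :: "'m::finite list \<Rightarrow> (real^'m \<Rightarrow> real) \<Rightarrow> real^'m \<Rightarrow> real" where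
  "cpartials [] f = f"
| "cpartials (i # is) f = cpartial i (cpartials is f)"

definition smooth_on :: "(real^'m::finite) set \<Rightarrow> (real^'m \<Rightarrow> real) \<Rightarrow> bool" where
  "smooth_on U f \<longleftrightarrow> (\<forall>is. cpartials is f differentiable_on U)"

text \<open>A Riemannian metric in coordinates: G p i j = g(d_i, d_j) at p.\<close>
definition riem_metric_on :: "(real^'m::finite) set \<Rightarrow> (real^'m \<Rightarrow> 'm \<Rightarrow> 'm \<Rightarrow> real) \<Rightarrow> bool" where
  "riem_metric_on U G \<longleftrightarrow>
     (\<forall>i j. smooth_on U (\<lambda>p. G p i j)) \<and>
     (\<forall>p\<in>U. \<forall>i j. G p i j = G p j i) \<and>
     (\<forall>p\<in>U. \<forall>v::real^'m. v \<noteq> 0 \<longrightarrow> (\<Sum>i\<in>UNIV. \<Sum>j\<in>UNIV. v$i * v$j * G p i j) > 0)"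

definition ginv :: "(real^'m::finite \<Rightarrow> 'm \<Rightarrow> 'm \<Rightarrow> real) \<Rightarrow> real^'m \<Rightarrow> 'm \<Rightarrow> 'm \<Rightarrow> real" where
  "ginv G p i j = matrix_inv (\<chi> a b. G p a b) $ i $ j"

text \<open>Christoffel symbols of the Levi-Civita connection: nabla_{d_i} d_j = Gamma^k_{ij} d_k;
  christ G p i j k = Gamma^k_{ij}.\<close>
definition christ :: "(real^'m::finite \<Rightarrow> 'm \<Rightarrow> 'm \<Rightarrow> real) \<Rightarrow> real^'m \<Rightarrow> 'm \<Rightarrow> 'm \<Rightarrow> 'm \<Rightarrow> real" where
  "christ G p i j k = (1/2) * (\<Sum>l\<in>UNIV. ginv G p k l *
      (cpartial i (\<lambda>q. G q j l) p + cpartial j (\<lambda>q. G q i l) p - cpartial l (\<lambda>q. G q i j) p))"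

text \<open>R(d_i,d_j)d_k = [nabla_i,nabla_j] d_k = curv_up G p i j k l * d_l.\<close>
definition curv_up :: "(real^'m::finite \<Rightarrow> 'm \<Rightarrow> 'm \<Rightarrow> real) \<Rightarrow> real^'m \<Rightarrow> 'm \<Rightarrow> 'm \<Rightarrow> 'm \<Rightarrow> 'm \<Rightarrow> real" where
  "curv_up G p i j k l =
     cpartial i (\<lambda>q. christ G q j k l) p - cpartial j (\<lambda>q. christ G q i k l) p
     + (\<Sum>m\<in>UNIV. christ G p j k m * christ G p i m l - christ G p i k m * christ G p j m l)"

definition curv :: "(real^'m::finite \<Rightarrow> 'm \<Rightarrow> 'm \<Rightarrow> real) \<Rightarrow> real^'m \<Rightarrow> 'm \<Rightarrow> 'm \<Rightarrow> 'm \<Rightarrow> 'm \<Rightarrow> real" where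
  "curv G p i j k l = (\<Sum>m\<in>UNIV. curv_up G p i j k m * G p m l)"

definition curv4 :: "(real^'m::finite \<Rightarrow> 'm \<Rightarrow> 'm \<Rightarrow> real) \<Rightarrow> real^'m \<Rightarrow> real^'m \<Rightarrow> real^'m \<Rightarrow> real^'m \<Rightarrow> real^'m \<Rightarrow> real" where
  "curv4 G p X Y Z W = (\<Sum>a\<in>UNIV. \<Sum>b\<in>UNIV. \<Sum>c\<in>UNIV. \<Sum>d\<in>UNIV.
      X$a * Y$b * Z$c * W$d * curv G p a b c d)"

text \<open>Components: phi x j i = phi_j^i (phi d_j = phi_j^i d_i), xi x i = xi^i, eta x i = eta_i.\<close>
definition almost_contact_metric_on ::
  "(real^'n::finite) set \<Rightarrow> (real^'n \<Rightarrow> 'n \<Rightarrow> 'n \<Rightarrow> real) \<Rightarrow> (real^'n \<Rightarrow> 'n \<Rightarrow> real)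
   \<Rightarrow> (real^'n \<Rightarrow> 'n \<Rightarrow> real) \<Rightarrow> (real^'n \<Rightarrow> 'n \<Rightarrow> 'n \<Rightarrow> real) \<Rightarrow> bool" where
  "almost_contact_metric_on U phi xi eta g \<longleftrightarrow>
     riem_metric_on U g \<and>
     (\<forall>i j. smooth_on U (\<lambda>x. phi x j i)) \<and> (\<forall>i. smooth_on U (\<lambda>x. xi x i)) \<and>
     (\<forall>i. smooth_on U (\<lambda>x. eta x i)) \<and>
     (\<forall>x\<in>U.
        \<comment> \<open>phi^2 X = -X + eta(X) xi\<close>
        (\<forall>j i. (\<Sum>a\<in>UNIV. phi x j a * phi x a i) = - (if j = i then 1 else 0) + eta x j * xi x i) \<and>
        \<comment> \<open>phi xi = 0\<close>
        (\<forall>i. (\<Sum>j\<in>UNIV. xi x j * phi x j i) = 0) \<and>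
        \<comment> \<open>eta o phi = 0\<close>
        (\<forall>j. (\<Sum>i\<in>UNIV. phi x j i * eta x i) = 0) \<and>
        \<comment> \<open>eta(xi) = 1\<close>
        (\<Sum>i\<in>UNIV. eta x i * xi x i) = 1 \<and>
        \<comment> \<open>g(phi X, phi Y) = g(X,Y) - eta(X) eta(Y)\<close>
        (\<forall>i j. (\<Sum>a\<in>UNIV. \<Sum>b\<in>UNIV. phi x i a * phi x j b * g x a b) = g x i j - eta x i * eta x j) \<and>
        \<comment> \<open>eta(X) = g(xi, X)\<close>
        (\<forall>i. eta x i = (\<Sum>j\<in>UNIV. g x i j * xi x j)))"

text \<open>Coordinates on M x R: index Some i is the i-th coordinate of M, index None is t.\<close>
definition mpart :: "real^('n::finite option) \<Rightarrow> real^'n" where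
  "mpart q = (\<chi> i. q $ Some i)"

definition tpart :: "real^('n::finite option) \<Rightarrow> real" where
  "tpart q = q $ None"

definition prod_dom :: "(real^'n::finite) set \<Rightarrow> (real^('n option)) set" where
  "prod_dom U = {q. mpart q \<in> U}"

definition gbar :: "(real^'n::finite \<Rightarrow> 'n \<Rightarrow> 'n \<Rightarrow> real) \<Rightarrow> real^('n option) \<Rightarrow> 'n option \<Rightarrow> 'n option \<Rightarrow> real" where
  "gbar g q a b = exp (-2 * tpart q) *
     (case (a, b) of (Some i, Some j) \<Rightarrow> g (mpart q) i j
                   | (None, None) \<Rightarrow> 1
                   | _ \<Rightarrow> 0)"

text \<open>Jbar (X + f d_t) = phi X - eta(X) d_t + f xi.\<close>
definition Jbar :: "(real^'n::finite \<Rightarrow> 'n \<Rightarrow> 'n \<Rightarrow> real) \<Rightarrow> (real^'n \<Rightarrow> 'n \<Rightarrow> real)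
   \<Rightarrow> (real^'n \<Rightarrow> 'n \<Rightarrow> real) \<Rightarrow> real^('n option) \<Rightarrow> real^('n option) \<Rightarrow> real^('n option)" where
  "Jbar phi xi eta q v = (\<chi> a. case a of
       Some i \<Rightarrow> (\<Sum>j\<in>UNIV. v $ Some j * phi (mpart q) j i) + v $ None * xi (mpart q) i
     | None \<Rightarrow> - (\<Sum>j\<in>UNIV. v $ Some j * eta (mpart q) j))"

end

theory Submission
  imports Defs
begin

lemma sum_option_UNIV:
  "(\<Sum>a\<in>(UNIV::'n::finite option set). f a) = f None + (\<Sum>i\<in>UNIV. f (Some i))"
proof -
  have "(\<Sum>a\<in>(UNIV::'n option set). f a) = (\<Sum>a\<in>insert None (range Some). f a)"
    by (simp add: UNIV_option_conv)
  also have "\<dots> = f None + (\<Sum>a\<in>range Some. f a)"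
    by (subst sum.insert) auto
  also have "(\<Sum>a\<in>range Some. f a) = (\<Sum>i\<in>UNIV. f (Some i))"
    by (subst sum.reindex) (auto simp: inj_def)
  finally show ?thesis .
qed

lemma mpart_line_Some:
  "mpart (q + s *\<^sub>R axis (Some i) 1) = mpart q + s *\<^sub>R axis i (1::real)"
  by (simp add: mpart_def vec_eq_iff axis_def)

lemma tpart_line_Some:
  "tpart (q + s *\<^sub>R axis (Some i) (1::real)) = tpart q"
  by (simp add: tpart_def axis_def)

lemma mpart_line_None:
  "mpart (q + s *\<^sub>R axis None (1::real)) = mpart q"
  by (simp add: mpart_def vec_eq_iff axis_def)

lemma tpart_line_None:
  "tpart (q + s *\<^sub>R axis None (1::real)) = tpart q + s"
  by (simp add: tpart_def axis_def)

lemma ev_line_in_open: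
  fixes x v :: "'a::real_normed_vector"
  assumes "open U" "x \<in> U"
  shows "eventually (\<lambda>s::real. x + s *\<^sub>R v \<in> U) (nhds 0)"
proof -
  have c: "continuous_on UNIV (\<lambda>s::real. x + s *\<^sub>R v)"
    by (intro continuous_intros)
  have "open ((\<lambda>s::real. x + s *\<^sub>R v) -` U)"
    using continuous_on_open_vimage[of UNIV, THEN iffD1, OF open_UNIV c] assms(1) by auto
  moreover have "0 \<in> (\<lambda>s::real. x + s *\<^sub>R v) -` U" using assms by simp
  ultimately show ?thesis
    by (rule eventually_nhds_in_open[THEN eventually_mono]) auto
qed

lemma cpartial_const: "cpartial i (\<lambda>x. c) p = 0"
  by (simp add: cpartial_def)

lemma cpartial_cong_open:
  assumes "open U" "p \<in> U" "\<And>y. y \<in> U \<Longrightarrow> f y = h y"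
  shows "cpartial i f p = cpartial i h p"
  unfolding cpartial_def
  by (rule deriv_cong_ev[OF _ refl])
     (use ev_line_in_open[OF assms(1,2), of "axis i 1"] assms(3) in \<open>auto elim: eventually_mono\<close>)

lemma cpartial_Some_mpart:
  "cpartial (Some i) (\<lambda>q. F (mpart q)) q = cpartial i F (mpart q)"
  by (simp add: cpartial_def mpart_line_Some)

lemma cpartial_None_mpart:
  "cpartial None (\<lambda>q. F (mpart q)) q = 0"
  by (simp add: cpartial_def mpart_line_None)

lemma cpartial_cmult:
  assumes "f differentiable at p"
  shows "cpartial i (\<lambda>x. c * f x) p = c * cpartial i f p"
proof -
  have "(\<lambda>s::real. p + s *\<^sub>R axis i 1) differentiable at 0"
    by (intro derivative_intros)
  moreover have "f differentiable at ((\<lambda>s::real. p + s *\<^sub>R axis i 1) 0)" using assms by simp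
  ultimately have "(f \<circ> (\<lambda>s::real. p + s *\<^sub>R axis i 1)) differentiable at 0"
    by (rule differentiable_chain_at)
  then obtain D where D: "((\<lambda>s. f (p + s *\<^sub>R axis i 1)) has_real_derivative D) (at 0)"
    using real_differentiable_def by (auto simp: o_def)
  have "((\<lambda>s. c * f (p + s *\<^sub>R axis i 1)) has_real_derivative c * D) (at 0)"
    by (intro DERIV_cmult D)
  then show ?thesis using D unfolding cpartial_def by (simp add: DERIV_imp_deriv)
qed

definition Eg :: "(real^'n::finite \<Rightarrow> 'n \<Rightarrow> 'n \<Rightarrow> real) \<Rightarrow> real^'n \<Rightarrow> 'n option \<Rightarrow> 'n option \<Rightarrow> real" where
  "Eg g x a b = (case (a, b) of (Some i, Some j) \<Rightarrow> g x i j | (None, None) \<Rightarrow> 1 | _ \<Rightarrow> 0)"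

lemma gbar_Eg: "gbar g q a b = exp (-2 * tpart q) * Eg g (mpart q) a b"
  by (simp add: gbar_def Eg_def)

lemma cpartial_gbar_Some:
  assumes "(\<lambda>x. Eg g x a b) differentiable at (mpart q)"
  shows "cpartial (Some i) (\<lambda>q. gbar g q a b) q = exp (-2 * tpart q) * cpartial i (\<lambda>x. Eg g x a b) (mpart q)"
proof -
  have "cpartial (Some i) (\<lambda>q. gbar g q a b) q = cpartial i (\<lambda>x. exp (-2 * tpart q) * Eg g x a b) (mpart q)"
    by (simp add: cpartial_def gbar_Eg mpart_line_Some tpart_line_Some)
  also have "\<dots> = exp (-2 * tpart q) * cpartial i (\<lambda>x. Eg g x a b) (mpart q)"
    by (rule cpartial_cmult[OF assms])
  finally show ?thesis .
qed

lemma cpartial_gbar_None: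
  "cpartial None (\<lambda>q. gbar g q a b) q = -2 * gbar g q a b"
proof -
  have eq: "(\<lambda>s. gbar g (q + s *\<^sub>R axis None 1) a b) = (\<lambda>s. exp (-2 * (tpart q + s)) * Eg g (mpart q) a b)"
    by (simp add: gbar_Eg mpart_line_None tpart_line_None)
  have "((\<lambda>s. exp (-2 * (tpart q + s)) * Eg g (mpart q) a b) has_real_derivative
          (exp (-2 * tpart q) * (-2)) * Eg g (mpart q) a b) (at 0)"
    by (rule derivative_eq_intros refl | simp)+
  then show ?thesis unfolding cpartial_def eq
    by (simp add: DERIV_imp_deriv gbar_Eg)
qed


lemma if0_mult: "(if P then a else 0) * (y::real) = (if P then a * y else 0)"
  "(y::real) * (if P then a else 0) = (if P then y * a else 0)" by auto

lemma matrix_inv_eq: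
  fixes A B :: "real^'k::finite^'k"
  assumes "A ** B = mat 1" "B ** A = mat 1"
  shows "matrix_inv A = B"
  unfolding matrix_inv_def
proof (rule some_equality)
  show "A ** B = mat 1 \<and> B ** A = mat 1" using assms by simp
  fix C assume C: "A ** C = mat 1 \<and> C ** A = mat 1"
  have "C = C ** (A ** B)" using assms by (simp add: matrix_mul_rid)
  also have "\<dots> = (C ** A) ** B" by (simp add: matrix_mul_assoc)
  also have "\<dots> = B" using C by (simp add: matrix_mul_lid)
  finally show "C = B" .
qed

definition Einv :: "(real^'n::finite \<Rightarrow> 'n \<Rightarrow> 'n \<Rightarrow> real) \<Rightarrow> real^'n \<Rightarrow> 'n option \<Rightarrow> 'n option \<Rightarrow> real" where
  "Einv g x a b = (case (a, b) of (Some i, Some j) \<Rightarrow> ginv g x i j | (None, None) \<Rightarrow> 1 | _ \<Rightarrow> 0)"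

locale metric_setup =
  fixes U :: "(real^'n::finite) set" and g :: "real^'n \<Rightarrow> 'n \<Rightarrow> 'n \<Rightarrow> real"
  assumes openU: "open U" and riem: "riem_metric_on U g"
begin

lemma g_sym: "x \<in> U \<Longrightarrow> g x i j = g x j i"
  using riem by (simp add: riem_metric_on_def)

lemma g_diff: "x \<in> U \<Longrightarrow> (\<lambda>x. g x i j) differentiable at x"
proof -
  assume x: "x \<in> U"
  have "smooth_on U (\<lambda>p. g p i j)" using riem by (simp add: riem_metric_on_def)
  then have "(\<lambda>p. g p i j) differentiable_on U"
    unfolding smooth_on_def by (metis cpartials.simps(1))
  then show ?thesis using x openU by (simp add: differentiable_on_eq_differentiable_at)
qed

lemma Eg_diff: "x \<in> U \<Longrightarrow> (\<lambda>x. Eg g x a b) differentiable at x"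
  by (cases a; cases b) (auto simp: Eg_def g_diff)

lemma g_invertible:
  assumes x: "x \<in> U"
  shows "invertible (\<chi> i j. g x i j)"
proof -
  let ?A = "(\<chi> i j. g x i j) :: real^'n^'n"
  have "\<forall>v. ?A *v v = 0 \<longrightarrow> v = 0"
  proof (intro allI impI)
    fix v :: "real^'n" assume Av: "?A *v v = 0"
    have "(\<Sum>i\<in>UNIV. \<Sum>j\<in>UNIV. v$i * v$j * g x i j) = (\<Sum>i\<in>UNIV. v$i * (?A *v v)$i)"
      by (simp add: matrix_vector_mult_def sum_distrib_left mult_ac)
    also have "\<dots> = 0" using Av by simp
    finally show "v = 0" using riem x unfolding riem_metric_on_def by force
  qed
  then obtain B where B: "B ** ?A = mat 1" using matrix_left_invertible_ker by blast
  then have "?A ** B = mat 1" using matrix_left_right_inverse by blast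
  with B show ?thesis unfolding invertible_def by blast
qed

lemma ginv_props:
  assumes x: "x \<in> U"
  shows "(\<chi> i j. g x i j) ** matrix_inv (\<chi> i j. g x i j) = mat 1"
    "matrix_inv (\<chi> i j. g x i j) ** (\<chi> i j. g x i j) = mat 1"
proof -
  have "\<exists>A'. (\<chi> i j. g x i j) ** A' = mat 1 \<and> A' ** (\<chi> i j. g x i j) = mat 1"
    using g_invertible[OF x] unfolding invertible_def by blast
  then have "(\<chi> i j. g x i j) ** matrix_inv (\<chi> i j. g x i j) = mat 1 \<and> matrix_inv (\<chi> i j. g x i j) ** (\<chi> i j. g x i j) = mat 1"
    unfolding matrix_inv_def by (rule someI_ex)
  then show "(\<chi> i j. g x i j) ** matrix_inv (\<chi> i j. g x i j) = mat 1"
    "matrix_inv (\<chi> i j. g x i j) ** (\<chi> i j. g x i j) = mat 1" by auto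
qed

lemma g_ginv: "x \<in> U \<Longrightarrow> (\<Sum>k\<in>UNIV. g x i k * ginv g x k j) = (if i = j then 1 else 0)"
  using ginv_props(1)[of x] unfolding ginv_def
  by (simp add: vec_eq_iff matrix_matrix_mult_def mat_def)

lemma ginv_g: "x \<in> U \<Longrightarrow> (\<Sum>k\<in>UNIV. ginv g x i k * g x k j) = (if i = j then 1 else 0)"
  using ginv_props(2)[of x] unfolding ginv_def
  by (simp add: vec_eq_iff matrix_matrix_mult_def mat_def)

lemma ginv_gbar:
  assumes q: "mpart q \<in> U"
  shows "ginv (gbar g) q a b = exp (2 * tpart q) * Einv g (mpart q) a b"
proof -
  let ?x = "mpart q" and ?t = "tpart q"
  let ?M = "(\<chi> a b. gbar g q a b) :: real^'n option^'n option"
  let ?B = "(\<chi> a b. exp (2 * ?t) * Einv g ?x a b) :: real^'n option^'n option"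
  have e: "exp (-2 * ?t) * exp (2 * ?t) = 1" by (simp add: exp_add[symmetric])
  have ee: "exp (- (2 * ?t)) * y * (exp (2 * ?t) * z) = y * z" for y z
  proof -
    have "exp (- (2 * ?t)) * y * (exp (2 * ?t) * z) = (exp (-2 * ?t) * exp (2 * ?t)) * (y * z)"
      by (simp add: mult_ac)
    then show ?thesis using e by simp
  qed
  have ee': "exp (2 * ?t) * y * (exp (- (2 * ?t)) * z) = y * z" for y z
    using ee[of y z] by (simp add: mult_ac)
  have "?M ** ?B = mat 1"
  proof -
    have "(\<Sum>c\<in>UNIV. Eg g ?x a c * Einv g ?x c b) = (if a = b then 1 else 0)" for a b
      by (cases a; cases b) (simp_all add: sum_option_UNIV Eg_def Einv_def g_ginv[OF q])
    then show ?thesis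
      by (simp add: vec_eq_iff matrix_matrix_mult_def mat_def gbar_Eg ee)
  qed
  moreover have "?B ** ?M = mat 1"
  proof -
    have "(\<Sum>c\<in>UNIV. Einv g ?x a c * Eg g ?x c b) = (if a = b then 1 else 0)" for a b
      by (cases a; cases b) (simp_all add: sum_option_UNIV Eg_def Einv_def ginv_g[OF q])
    then show ?thesis
      by (simp add: vec_eq_iff matrix_matrix_mult_def mat_def gbar_Eg ee')
  qed
  ultimately have "matrix_inv ?M = ?B" by (rule matrix_inv_eq)
  then show ?thesis by (simp add: ginv_def)
qed


definition DEg :: "real^'n \<Rightarrow> 'n option \<Rightarrow> 'n option \<Rightarrow> 'n option \<Rightarrow> real" where
  "DEg x a b l = (case a of Some i \<Rightarrow> cpartial i (\<lambda>x. Eg g x b l) x | None \<Rightarrow> -2 * Eg g x b l)"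

lemma cpartial_gbar:
  assumes q: "mpart q \<in> U"
  shows "cpartial a (\<lambda>q. gbar g q b l) q = exp (-2 * tpart q) * DEg (mpart q) a b l"
proof (cases a)
  case None
  have "cpartial None (\<lambda>q. gbar g q b l) q = -2 * gbar g q b l" by (rule cpartial_gbar_None)
  then show ?thesis by (simp add: DEg_def gbar_Eg None)
next
  case (Some i)
  show ?thesis using cpartial_gbar_Some[OF Eg_diff[OF q]] by (simp add: DEg_def Some)
qed

lemma christ_gbar_gen:
  assumes q: "mpart q \<in> U"
  shows "christ (gbar g) q a b c = 1/2 * (\<Sum>l\<in>UNIV. Einv g (mpart q) c l *
            (DEg (mpart q) a b l + DEg (mpart q) b a l - DEg (mpart q) l a b))"
proof -
  let ?t = "tpart q"
  have e: "exp (2 * ?t) * exp (-2 * ?t) = 1" by (simp add: exp_add[symmetric])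
  have h: "exp (2 * ?t) * y * (exp (-2 * ?t) * A + exp (-2 * ?t) * B - exp (-2 * ?t) * C) = y * (A + B - C)"
    for y A B C
  proof -
    have "exp (2 * ?t) * y * (exp (-2 * ?t) * A + exp (-2 * ?t) * B - exp (-2 * ?t) * C)
        = (exp (2 * ?t) * exp (-2 * ?t)) * (y * (A + B - C))" by (simp add: algebra_simps)
    then show ?thesis by (simp only: e mult_1_left)
  qed
  show ?thesis
    unfolding christ_def ginv_gbar[OF q] cpartial_gbar[OF q] by (simp only: h)
qed

end

definition Gbar :: "(real^'n::finite \<Rightarrow> 'n \<Rightarrow> 'n \<Rightarrow> real) \<Rightarrow> real^'n \<Rightarrow> 'n option \<Rightarrow> 'n option \<Rightarrow> 'n option \<Rightarrow> real" where
  "Gbar g x a b c = (case (a, b, c) of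
      (Some i, Some j, Some k) \<Rightarrow> christ g x i j k
    | (Some i, Some j, None) \<Rightarrow> g x i j
    | (Some i, None, Some k) \<Rightarrow> (if k = i then -1 else 0)
    | (None, Some j, Some k) \<Rightarrow> (if k = j then -1 else 0)
    | (None, None, None) \<Rightarrow> -1
    | _ \<Rightarrow> 0)"

context metric_setup
begin

lemma christ_gbar:
  assumes q: "mpart q \<in> U"
  shows "christ (gbar g) q a b c = Gbar g (mpart q) a b c"
proof -
  let ?x = "mpart q"
  have gi: "(\<Sum>l\<in>UNIV. ginv g ?x k l * g ?x i l) = (if k = i then 1 else 0)" for k i
    using ginv_g[OF q, of k i] by (simp add: g_sym[OF q, of i])
  have gi2: "(\<Sum>l\<in>UNIV. - (ginv g ?x k l * (2 * g ?x i l))) = (if k = i then -2 else 0)" for k i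
  proof -
    have "(\<Sum>l\<in>UNIV. - (ginv g ?x k l * (2 * g ?x i l))) = -2 * (\<Sum>l\<in>UNIV. ginv g ?x k l * g ?x i l)"
      by (simp add: sum_distrib_left sum_negf mult_ac)
    then show ?thesis using gi[of k i] by simp
  qed
  show ?thesis
    unfolding christ_gbar_gen[OF q]
    apply (cases a; cases b; cases c)
    apply (simp_all add: sum_option_UNIV Eg_def Einv_def DEg_def Gbar_def cpartial_const christ_def gi2)
    done
qed


lemma cpartial_christ_gbar:
  assumes q: "mpart q \<in> U"
  shows "cpartial a (\<lambda>q'. christ (gbar g) q' b c d) q
         = (case a of Some i \<Rightarrow> cpartial i (\<lambda>y. Gbar g y b c d) (mpart q) | None \<Rightarrow> 0)"
proof (cases a)
  case None
  have "(\<lambda>s. christ (gbar g) (q + s *\<^sub>R axis None 1) b c d) = (\<lambda>s. Gbar g (mpart q) b c d)"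
    using q by (simp add: christ_gbar mpart_line_None)
  then show ?thesis by (simp add: None cpartial_def)
next
  case (Some i)
  have "eventually (\<lambda>s. christ (gbar g) (q + s *\<^sub>R axis (Some i) 1) b c d = Gbar g (mpart q + s *\<^sub>R axis i 1) b c d) (nhds 0)"
    using ev_line_in_open[OF openU q, of "axis i 1"]
    by (auto elim!: eventually_mono simp: christ_gbar mpart_line_Some)
  then show ?thesis unfolding Some cpartial_def
    by (simp add: deriv_cong_ev)
qed

end

definition DG :: "(real^'n::finite \<Rightarrow> 'n \<Rightarrow> 'n \<Rightarrow> real) \<Rightarrow> real^'n \<Rightarrow> 'n option \<Rightarrow> 'n option \<Rightarrow> 'n option \<Rightarrow> 'n option \<Rightarrow> real" where
  "DG g x a b c d = (case a of Some i \<Rightarrow> cpartial i (\<lambda>y. Gbar g y b c d) x | None \<Rightarrow> 0)"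

definition CU :: "(real^'n::finite \<Rightarrow> 'n \<Rightarrow> 'n \<Rightarrow> real) \<Rightarrow> real^'n \<Rightarrow> 'n option \<Rightarrow> 'n option \<Rightarrow> 'n option \<Rightarrow> 'n option \<Rightarrow> real" where
  "CU g x a b c d = DG g x a b c d - DG g x b a c d
     + (\<Sum>m\<in>UNIV. Gbar g x b c m * Gbar g x a m d - Gbar g x a c m * Gbar g x b m d)"

context metric_setup
begin

lemma curv_up_gbar:
  assumes q: "mpart q \<in> U"
  shows "curv_up (gbar g) q a b c d = CU g (mpart q) a b c d"
  unfolding curv_up_def CU_def DG_def cpartial_christ_gbar[OF q] christ_gbar[OF q] ..

lemma dsym: "x \<in> U \<Longrightarrow> cpartial i (\<lambda>y. g y j k) x = cpartial i (\<lambda>y. g y k j) x"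
  by (rule cpartial_cong_open[OF openU]) (auto simp: g_sym)

lemma christ_sym: assumes x: "x \<in> U" shows "christ g x i j k = christ g x j i k"
proof -
  have "\<And>l. cpartial l (\<lambda>q. g q j i) x = cpartial l (\<lambda>q. g q i j) x" by (rule dsym[OF x])
  then show ?thesis unfolding christ_def by (simp add: add.commute)
qed

lemma christ_low:
  assumes x: "x \<in> U"
  shows "(\<Sum>m\<in>UNIV. christ g x a b m * g x m c) = 1/2 * (cpartial a (\<lambda>y. g y b c) x
           + cpartial b (\<lambda>y. g y a c) x - cpartial c (\<lambda>y. g y a b) x)"
proof -
  let ?P = "\<lambda>l. cpartial a (\<lambda>q. g q b l) x + cpartial b (\<lambda>q. g q a l) x - cpartial l (\<lambda>q. g q a b) x"
  have "(\<Sum>m\<in>UNIV. christ g x a b m * g x m c) = 1/2 * (\<Sum>l\<in>UNIV. (\<Sum>m\<in>UNIV. g x c m * ginv g x m l) * ?P l)"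
  proof -
    have "(\<Sum>m\<in>UNIV. christ g x a b m * g x m c) = (\<Sum>m\<in>UNIV. \<Sum>l\<in>UNIV. 1/2 * (g x c m * ginv g x m l * ?P l))"
      unfolding christ_def by (simp add: sum_distrib_left sum_distrib_right g_sym[OF x, of _ c] mult_ac)
    also have "\<dots> = (\<Sum>l\<in>UNIV. \<Sum>m\<in>UNIV. 1/2 * (g x c m * ginv g x m l * ?P l))"
      by (rule sum.swap)
    also have "\<dots> = 1/2 * (\<Sum>l\<in>UNIV. (\<Sum>m\<in>UNIV. g x c m * ginv g x m l) * ?P l)"
      by (simp add: sum_distrib_left sum_distrib_right)
    finally show ?thesis .
  qed
  also have "\<dots> = 1/2 * ?P c"
  proof -
    have e: "(if c = l then 1 else 0) * y = (if c = l then y else 0)" for l and y :: real by simp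
    show ?thesis by (simp add: g_ginv[OF x] e)
  qed
  finally show ?thesis .
qed

lemma CU_SSSS: "x \<in> U \<Longrightarrow> CU g x (Some i) (Some j) (Some k) (Some m)
   = curv_up g x i j k m - (if m = i then g x j k else 0) + (if m = j then g x i k else 0)"
  by (simp add: CU_def DG_def Gbar_def sum_option_UNIV curv_up_def sum_subtractf)

lemma CU_SSSN: assumes x: "x \<in> U" shows "CU g x (Some i) (Some j) (Some k) None = 0"
proof -
  have s1: "(\<Sum>m\<in>UNIV. christ g x j k m * g x i m) = (\<Sum>m\<in>UNIV. christ g x j k m * g x m i)"
    by (intro sum.cong refl) (metis g_sym x)
  have s2: "(\<Sum>m\<in>UNIV. christ g x i k m * g x j m) = (\<Sum>m\<in>UNIV. christ g x i k m * g x m j)"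
    by (intro sum.cong refl) (metis g_sym x)
  have d1: "cpartial j (\<lambda>y. g y k i) x = cpartial j (\<lambda>y. g y i k) x" by (rule dsym[OF x])
  have d2: "cpartial k (\<lambda>y. g y j i) x = cpartial k (\<lambda>y. g y i j) x" by (rule dsym[OF x])
  have d3: "cpartial i (\<lambda>y. g y k j) x = cpartial i (\<lambda>y. g y j k) x" by (rule dsym[OF x])
  show ?thesis
    apply (simp add: CU_def DG_def Gbar_def sum_option_UNIV sum_subtractf s1 s2 christ_low[OF x] d1 d2 d3)
    apply (simp add: field_simps)
    done
qed

lemma CU_SSN: "x \<in> U \<Longrightarrow> CU g x (Some i) (Some j) None d = 0"
  apply (cases d)
  apply (simp_all add: CU_def DG_def Gbar_def sum_option_UNIV sum_subtractf cpartial_const if0_mult christ_sym g_sym)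
  done

lemma CU_N1: "x \<in> U \<Longrightarrow> CU g x None (Some j) c d = 0"
  apply (cases c; cases d)
  apply (simp_all add: CU_def DG_def Gbar_def sum_option_UNIV sum_subtractf cpartial_const if0_mult christ_sym g_sym)
  done


lemma CU_anti: "CU g x a b c d = - CU g x b a c d"
  unfolding CU_def by (simp add: sum_subtractf algebra_simps)

lemma CU_zero:
  assumes x: "x \<in> U" and "a = None \<or> b = None \<or> c = None \<or> d = None"
  shows "CU g x a b c d = 0"
proof -
  have N: "CU g x None b c d = 0" for b c d
  proof (cases b)
    case None then show ?thesis using CU_anti[of x None None c d] by simp
  next
    case (Some j) then show ?thesis using CU_N1[OF x] by simp
  qed
  show ?thesis
  proof (cases a)
    case None then show ?thesis using N by simp
  next
    case (Some i)
    show ?thesis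
    proof (cases b)
      case None then show ?thesis using N CU_anti[of x a None c d] by simp
    next
      case (Some j)
      show ?thesis
      proof (cases c)
        case None then show ?thesis using CU_SSN[OF x] \<open>a = Some i\<close> Some by simp
      next
        case (Some k)
        then have "d = None" using assms(2) \<open>a = Some i\<close> \<open>b = Some j\<close> by simp
        then show ?thesis using CU_SSSN[OF x] \<open>a = Some i\<close> \<open>b = Some j\<close> Some by simp
      qed
    qed
  qed
qed

definition Sg :: "real^'n \<Rightarrow> 'n option \<Rightarrow> 'n option \<Rightarrow> 'n option \<Rightarrow> 'n option \<Rightarrow> real" where
  "Sg x a b c d = (case (a, b, c, d) of (Some i, Some j, Some k, Some l) \<Rightarrow>
       curv g x i j k l - g x i l * g x j k + g x j l * g x i k | _ \<Rightarrow> 0)"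

lemma curv_gbar:
  assumes q: "mpart q \<in> U"
  shows "curv (gbar g) q a b c d = exp (-2 * tpart q) * Sg (mpart q) a b c d"
proof -
  let ?x = "mpart q"
  have "curv (gbar g) q a b c d = exp (-2 * tpart q) * (\<Sum>m\<in>UNIV. CU g ?x a b c m * Eg g ?x m d)"
    unfolding curv_def curv_up_gbar[OF q] gbar_Eg by (simp add: sum_distrib_left mult_ac)
  also have "(\<Sum>m\<in>UNIV. CU g ?x a b c m * Eg g ?x m d) = Sg ?x a b c d"
  proof (cases "a = None \<or> b = None \<or> c = None")
    case True
    then show ?thesis using CU_zero[OF q]
      by (auto simp: Sg_def split: option.splits)
  next
    case False
    then obtain i j k where abc: "a = Some i" "b = Some j" "c = Some k" by auto
    show ?thesis
    proof (cases d)
      case None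
      then show ?thesis using abc CU_zero[OF q] by (simp add: sum_option_UNIV Eg_def Sg_def)
    next
      case (Some l)
      have "(\<Sum>m\<in>UNIV. CU g ?x a b c (Some m) * g ?x m l)
          = (\<Sum>m\<in>UNIV. curv_up g ?x i j k m * g ?x m l) - g ?x i l * g ?x j k + g ?x j l * g ?x i k"
        by (simp add: abc CU_SSSS[OF q] algebra_simps sum_subtractf sum.distrib if0_mult)
      then show ?thesis using abc Some CU_zero[OF q]
        by (simp add: sum_option_UNIV Eg_def Sg_def curv_def)
    qed
  qed
  finally show ?thesis .
qed

end


locale acm_alg =
  fixes p :: "'n::finite \<Rightarrow> 'n \<Rightarrow> real" and xv et :: "'n \<Rightarrow> real" and G :: "'n \<Rightarrow> 'n \<Rightarrow> real"
  assumes A: "\<And>j i. (\<Sum>a\<in>UNIV. p j a * p a i) = - (if j = i then 1 else 0) + et j * xv i"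
    and B: "\<And>i. (\<Sum>j\<in>UNIV. xv j * p j i) = 0"
    and C: "\<And>j. (\<Sum>i\<in>UNIV. p j i * et i) = 0"
    and E: "\<And>i j. (\<Sum>a\<in>UNIV. \<Sum>b\<in>UNIV. p i a * p j b * G a b) = G i j - et i * et j"
    and F: "\<And>i. et i = (\<Sum>j\<in>UNIV. G i j * xv j)"
    and Gs: "\<And>i j. G i j = G j i"
begin

definition P :: "'n \<Rightarrow> 'n \<Rightarrow> real" where "P i l = (\<Sum>a\<in>UNIV. G a l * p i a)"

lemma P_anti: "P l i = - P i l"
proof -
  let ?L = "(\<Sum>a\<in>UNIV. \<Sum>b\<in>UNIV. p i a * (\<Sum>m\<in>UNIV. p l m * p m b) * G a b)"
  have "?L = (\<Sum>a\<in>UNIV. \<Sum>b\<in>UNIV. p i a * (- (if l = b then 1 else 0) + et l * xv b) * G a b)"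
    by (simp add: A)
  also have "\<dots> = (\<Sum>a\<in>UNIV. - (p i a * G a l) + et l * (p i a * (\<Sum>b\<in>UNIV. G a b * xv b)))"
  proof (rule sum.cong[OF refl])
    fix a
    have "(\<Sum>b\<in>UNIV. p i a * (- (if l = b then 1 else 0) + et l * xv b) * G a b)
        = (\<Sum>b\<in>UNIV. - (if l = b then p i a * G a b else 0) + et l * (p i a * (G a b * xv b)))"
      by (intro sum.cong refl) (simp add: algebra_simps)
    also have "\<dots> = - (p i a * G a l) + et l * (p i a * (\<Sum>b\<in>UNIV. G a b * xv b))"
      by (simp only: sum.distrib sum_negf sum_distrib_left sum.delta sum.delta' finite UNIV_I if_True)
    finally show "(\<Sum>b\<in>UNIV. p i a * (- (if l = b then 1 else 0) + et l * xv b) * G a b)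
        = - (p i a * G a l) + et l * (p i a * (\<Sum>b\<in>UNIV. G a b * xv b))" .
  qed
  also have "\<dots> = - (\<Sum>a\<in>UNIV. p i a * G a l) + et l * (\<Sum>a\<in>UNIV. p i a * (\<Sum>b\<in>UNIV. G a b * xv b))"
    by (simp only: sum.distrib sum_negf sum_distrib_left)
  also have "(\<Sum>a\<in>UNIV. p i a * (\<Sum>b\<in>UNIV. G a b * xv b)) = 0"
    using C[of i] by (simp add: F)
  finally have L1: "?L = - P i l" by (simp add: P_def mult.commute)
  have "?L = (\<Sum>a\<in>UNIV. \<Sum>b\<in>UNIV. \<Sum>m\<in>UNIV. p l m * (p i a * p m b * G a b))"
    by (simp add: sum_distrib_left sum_distrib_right mult_ac)
  also have "\<dots> = (\<Sum>a\<in>UNIV. \<Sum>m\<in>UNIV. \<Sum>b\<in>UNIV. p l m * (p i a * p m b * G a b))"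
    by (rule sum.cong[OF refl], rule sum.swap)
  also have "\<dots> = (\<Sum>m\<in>UNIV. \<Sum>a\<in>UNIV. \<Sum>b\<in>UNIV. p l m * (p i a * p m b * G a b))"
    by (rule sum.swap)
  also have "\<dots> = (\<Sum>m\<in>UNIV. p l m * (G i m - et i * et m))"
    by (simp add: sum_distrib_left[symmetric] E)
  also have "\<dots> = (\<Sum>m\<in>UNIV. p l m * G i m)"
  proof -
    have "(\<Sum>m\<in>UNIV. p l m * (et i * et m)) = et i * (\<Sum>m\<in>UNIV. p l m * et m)"
      by (simp add: sum_distrib_left mult_ac)
    then have c: "(\<Sum>m\<in>UNIV. p l m * (et i * et m)) = 0" using C[of l] by simp
    show ?thesis by (simp only: right_diff_distrib sum_subtractf c diff_zero)
  qed
  also have "\<dots> = P l i" unfolding P_def by (intro sum.cong refl) (simp add: Gs mult.commute)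
  finally show ?thesis using L1 by simp
qed

lemma PG: "(\<Sum>c\<in>UNIV. G j c * p k c) = P k j"
  unfolding P_def by (intro sum.cong refl) (simp add: Gs)

lemma I1: "(\<Sum>c\<in>UNIV. \<Sum>d\<in>UNIV. p k c * p l d * (G i d * G j c - G j d * G i c))
   = P i l * P j k - P j l * P i k"
proof -
  have "(\<Sum>c\<in>UNIV. \<Sum>d\<in>UNIV. p k c * p l d * (G i d * G j c - G j d * G i c))
     = (\<Sum>c\<in>UNIV. \<Sum>d\<in>UNIV. (G j c * p k c) * (G i d * p l d)) - (\<Sum>c\<in>UNIV. \<Sum>d\<in>UNIV. (G i c * p k c) * (G j d * p l d))"
    by (simp add: sum_subtractf algebra_simps)
  also have "\<dots> = (\<Sum>c\<in>UNIV. G j c * p k c) * (\<Sum>d\<in>UNIV. G i d * p l d) - (\<Sum>c\<in>UNIV. G i c * p k c) * (\<Sum>d\<in>UNIV. G j d * p l d)"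
    by (simp only: sum_product)
  also have "\<dots> = P l i * P k j - P l j * P k i" by (simp add: PG)
  finally show ?thesis using P_anti[of l i] P_anti[of k j] P_anti[of l j] P_anti[of k i] by simp
qed

lemma I2: "(\<Sum>c\<in>UNIV. \<Sum>d\<in>UNIV. xv c * p l d * (G i d * G j c - G j d * G i c))
   = et i * P j l - et j * P i l"
proof -
  have "(\<Sum>c\<in>UNIV. \<Sum>d\<in>UNIV. xv c * p l d * (G i d * G j c - G j d * G i c))
     = (\<Sum>c\<in>UNIV. \<Sum>d\<in>UNIV. (G j c * xv c) * (G i d * p l d)) - (\<Sum>c\<in>UNIV. \<Sum>d\<in>UNIV. (G i c * xv c) * (G j d * p l d))"
    by (simp add: sum_subtractf algebra_simps)
  also have "\<dots> = (\<Sum>c\<in>UNIV. G j c * xv c) * (\<Sum>d\<in>UNIV. G i d * p l d) - (\<Sum>c\<in>UNIV. G i c * xv c) * (\<Sum>d\<in>UNIV. G j d * p l d)"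
    by (simp only: sum_product)
  also have "\<dots> = P l i * et j - P l j * et i" by (simp add: PG F[symmetric])
  finally show ?thesis using P_anti[of l i] P_anti[of l j] by (simp add: algebra_simps)
qed


definition S4 :: "('n \<Rightarrow> 'n \<Rightarrow> 'n \<Rightarrow> 'n \<Rightarrow> real) \<Rightarrow> 'n \<Rightarrow> 'n \<Rightarrow> 'n \<Rightarrow> 'n \<Rightarrow> real" where
  "S4 R i j k l = R i j k l - G i l * G j k + G j l * G i k"

lemma phiphi: "(\<Sum>c\<in>UNIV. \<Sum>d\<in>UNIV. p k c * p l d * S4 R i j c d)
   = (\<Sum>c\<in>UNIV. \<Sum>d\<in>UNIV. p k c * p l d * R i j c d) - (P i l * P j k - P j l * P i k)"
proof -
  have "(\<Sum>c\<in>UNIV. \<Sum>d\<in>UNIV. p k c * p l d * S4 R i j c d)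
     = (\<Sum>c\<in>UNIV. \<Sum>d\<in>UNIV. p k c * p l d * R i j c d - p k c * p l d * (G i d * G j c - G j d * G i c))"
    unfolding S4_def by (intro sum.cong refl) (simp add: algebra_simps)
  also have "\<dots> = (\<Sum>c\<in>UNIV. \<Sum>d\<in>UNIV. p k c * p l d * R i j c d)
      - (\<Sum>c\<in>UNIV. \<Sum>d\<in>UNIV. p k c * p l d * (G i d * G j c - G j d * G i c))"
    by (simp only: sum_subtractf)
  finally show ?thesis by (simp only: I1)
qed

lemma xiphi: "(\<Sum>c\<in>UNIV. \<Sum>d\<in>UNIV. xv c * p l d * S4 R i j c d)
   = (\<Sum>c\<in>UNIV. \<Sum>d\<in>UNIV. xv c * p l d * R i j c d) - (et i * P j l - et j * P i l)"
proof -
  have "(\<Sum>c\<in>UNIV. \<Sum>d\<in>UNIV. xv c * p l d * S4 R i j c d)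
     = (\<Sum>c\<in>UNIV. \<Sum>d\<in>UNIV. xv c * p l d * R i j c d - xv c * p l d * (G i d * G j c - G j d * G i c))"
    unfolding S4_def by (intro sum.cong refl) (simp add: algebra_simps)
  also have "\<dots> = (\<Sum>c\<in>UNIV. \<Sum>d\<in>UNIV. xv c * p l d * R i j c d)
      - (\<Sum>c\<in>UNIV. \<Sum>d\<in>UNIV. xv c * p l d * (G i d * G j c - G j d * G i c))"
    by (simp only: sum_subtractf)
  finally show ?thesis by (simp only: I2)
qed

lemma xi_contract:
  fixes S :: "'n \<Rightarrow> 'n \<Rightarrow> real"
  assumes h: "\<And>k l. S k l = (\<Sum>c\<in>UNIV. \<Sum>d\<in>UNIV. p k c * p l d * S c d)"
  shows "(\<Sum>f\<in>UNIV. xv f * S k f) = 0"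
proof -
  have "(\<Sum>f\<in>UNIV. xv f * S k f) = (\<Sum>f\<in>UNIV. \<Sum>c\<in>UNIV. \<Sum>d\<in>UNIV. p k c * S c d * (xv f * p f d))"
    by (subst h) (simp add: sum_distrib_left mult_ac)
  also have "\<dots> = (\<Sum>c\<in>UNIV. \<Sum>f\<in>UNIV. \<Sum>d\<in>UNIV. p k c * S c d * (xv f * p f d))"
    by (rule sum.swap)
  also have "\<dots> = (\<Sum>c\<in>UNIV. \<Sum>d\<in>UNIV. \<Sum>f\<in>UNIV. p k c * S c d * (xv f * p f d))"
    by (rule sum.cong[OF refl], rule sum.swap)
  also have "\<dots> = (\<Sum>c\<in>UNIV. \<Sum>d\<in>UNIV. p k c * S c d * (\<Sum>f\<in>UNIV. xv f * p f d))"
    by (simp only: sum_distrib_left)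
  also have "\<dots> = 0" by (simp add: B)
  finally show ?thesis .
qed

lemma alg_iff:
  "(\<forall>i j k l. S4 R i j k l = (\<Sum>e\<in>UNIV. \<Sum>f\<in>UNIV. p k e * p l f * S4 R i j e f)
        \<and> 0 = (\<Sum>e\<in>UNIV. \<Sum>f\<in>UNIV. p k e * xv f * S4 R i j e f)
        \<and> 0 = (\<Sum>e\<in>UNIV. \<Sum>f\<in>UNIV. xv e * p l f * S4 R i j e f)
        \<and> 0 = (\<Sum>e\<in>UNIV. \<Sum>f\<in>UNIV. xv e * xv f * S4 R i j e f))
   \<longleftrightarrow> (\<forall>i j k l. R i j k l - (\<Sum>c\<in>UNIV. \<Sum>d\<in>UNIV. p k c * p l d * R i j c d)
          = G i l * G j k - G j l * G i k - P i l * P j k + P j l * P i k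
        \<and> (\<Sum>c\<in>UNIV. \<Sum>d\<in>UNIV. xv c * p l d * R i j c d) = et i * P j l - et j * P i l)"
  (is "?L \<longleftrightarrow> ?R")
proof
  assume L: ?L
  show ?R
  proof (intro allI conjI)
    fix i j k l
    have "S4 R i j k l = (\<Sum>e\<in>UNIV. \<Sum>f\<in>UNIV. p k e * p l f * S4 R i j e f)" using L by blast
    then show "R i j k l - (\<Sum>c\<in>UNIV. \<Sum>d\<in>UNIV. p k c * p l d * R i j c d)
          = G i l * G j k - G j l * G i k - P i l * P j k + P j l * P i k"
      unfolding phiphi by (simp add: S4_def)
    have "0 = (\<Sum>e\<in>UNIV. \<Sum>f\<in>UNIV. xv e * p l f * S4 R i j e f)" using L by blast
    then show "(\<Sum>c\<in>UNIV. \<Sum>d\<in>UNIV. xv c * p l d * R i j c d) = et i * P j l - et j * P i l"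
      unfolding xiphi by simp
  qed
next
  assume R: ?R
  show ?L
  proof (intro allI)
    fix i j k l
    have h: "S4 R i j k l = (\<Sum>c\<in>UNIV. \<Sum>d\<in>UNIV. p k c * p l d * S4 R i j c d)" for k l
    proof -
      have "R i j k l - (\<Sum>c\<in>UNIV. \<Sum>d\<in>UNIV. p k c * p l d * R i j c d)
          = G i l * G j k - G j l * G i k - P i l * P j k + P j l * P i k" using R by blast
      then show ?thesis unfolding phiphi by (simp add: S4_def)
    qed
    have x: "(\<Sum>f\<in>UNIV. xv f * S4 R i j k f) = 0" for k
      by (rule xi_contract[of "S4 R i j"]) (rule h)
    have "(\<Sum>e\<in>UNIV. \<Sum>f\<in>UNIV. p k e * xv f * S4 R i j e f) = (\<Sum>e\<in>UNIV. p k e * (\<Sum>f\<in>UNIV. xv f * S4 R i j e f))"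
      by (simp add: sum_distrib_left mult_ac)
    then have 2: "0 = (\<Sum>e\<in>UNIV. \<Sum>f\<in>UNIV. p k e * xv f * S4 R i j e f)" by (simp add: x)
    have "(\<Sum>e\<in>UNIV. \<Sum>f\<in>UNIV. xv e * xv f * S4 R i j e f) = (\<Sum>e\<in>UNIV. xv e * (\<Sum>f\<in>UNIV. xv f * S4 R i j e f))"
      by (simp add: sum_distrib_left mult_ac)
    then have 4: "0 = (\<Sum>e\<in>UNIV. \<Sum>f\<in>UNIV. xv e * xv f * S4 R i j e f)" by (simp add: x)
    have 3: "0 = (\<Sum>e\<in>UNIV. \<Sum>f\<in>UNIV. xv e * p l f * S4 R i j e f)"
      using R unfolding xiphi by simp
    show "S4 R i j k l = (\<Sum>e\<in>UNIV. \<Sum>f\<in>UNIV. p k e * p l f * S4 R i j e f)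
        \<and> 0 = (\<Sum>e\<in>UNIV. \<Sum>f\<in>UNIV. p k e * xv f * S4 R i j e f)
        \<and> 0 = (\<Sum>e\<in>UNIV. \<Sum>f\<in>UNIV. xv e * p l f * S4 R i j e f)
        \<and> 0 = (\<Sum>e\<in>UNIV. \<Sum>f\<in>UNIV. xv e * xv f * S4 R i j e f)"
      using h 2 3 4 by blast
  qed
qed

end


lemma perm4:
  "(\<Sum>c\<in>A. \<Sum>d\<in>B. \<Sum>c'\<in>C. \<Sum>d'\<in>D. F c d c' d') = (\<Sum>c'\<in>C. \<Sum>d'\<in>D. \<Sum>c\<in>A. \<Sum>d\<in>B. F c d c' d')"
proof -
  have "(\<Sum>c\<in>A. \<Sum>d\<in>B. \<Sum>c'\<in>C. \<Sum>d'\<in>D. F c d c' d') = (\<Sum>c\<in>A. \<Sum>c'\<in>C. \<Sum>d\<in>B. \<Sum>d'\<in>D. F c d c' d')"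
    by (rule sum.cong[OF refl], rule sum.swap)
  also have "\<dots> = (\<Sum>c'\<in>C. \<Sum>c\<in>A. \<Sum>d\<in>B. \<Sum>d'\<in>D. F c d c' d')"
    by (rule sum.swap)
  also have "\<dots> = (\<Sum>c'\<in>C. \<Sum>c\<in>A. \<Sum>d'\<in>D. \<Sum>d\<in>B. F c d c' d')"
    by (rule sum.cong[OF refl], rule sum.cong[OF refl], rule sum.swap)
  also have "\<dots> = (\<Sum>c'\<in>C. \<Sum>d'\<in>D. \<Sum>c\<in>A. \<Sum>d\<in>B. F c d c' d')"
    by (rule sum.cong[OF refl], rule sum.swap)
  finally show ?thesis .
qed

lemma sum_axis: "(\<Sum>a'\<in>UNIV. axis a (1::real) $ a' * f a') = f a"
  by (simp add: axis_def if0_mult)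

lemma expand4: "(\<Sum>a\<in>A. \<Sum>b\<in>B. \<Sum>c\<in>C. \<Sum>d\<in>D. (x a::real) * y b * z c * w d * T a b c d)
   = (\<Sum>a\<in>A. x a * (\<Sum>b\<in>B. y b * (\<Sum>c\<in>C. z c * (\<Sum>d\<in>D. w d * T a b c d))))"
  by (simp add: sum_distrib_left mult.assoc)

lemma multilin_iff:
  fixes T :: "'a::finite \<Rightarrow> 'a \<Rightarrow> 'a \<Rightarrow> 'a \<Rightarrow> real" and Jm :: "'a \<Rightarrow> 'a \<Rightarrow> real"
    and J :: "real^'a \<Rightarrow> real^'a"
  assumes J: "\<And>Z. J Z = (\<chi> e. \<Sum>c\<in>UNIV. Z$c * Jm c e)"
  shows "(\<forall>X Y Z W. (\<Sum>a\<in>UNIV. \<Sum>b\<in>UNIV. \<Sum>c\<in>UNIV. \<Sum>d\<in>UNIV. X$a * Y$b * Z$c * W$d * T a b c d)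
            = (\<Sum>a\<in>UNIV. \<Sum>b\<in>UNIV. \<Sum>c\<in>UNIV. \<Sum>d\<in>UNIV. X$a * Y$b * (J Z)$c * (J W)$d * T a b c d))
    \<longleftrightarrow> (\<forall>a b c d. T a b c d = (\<Sum>e\<in>UNIV. \<Sum>f\<in>UNIV. Jm c e * Jm d f * T a b e f))"
proof
  assume H: "\<forall>X Y Z W. (\<Sum>a\<in>UNIV. \<Sum>b\<in>UNIV. \<Sum>c\<in>UNIV. \<Sum>d\<in>UNIV. X$a * Y$b * Z$c * W$d * T a b c d)
            = (\<Sum>a\<in>UNIV. \<Sum>b\<in>UNIV. \<Sum>c\<in>UNIV. \<Sum>d\<in>UNIV. X$a * Y$b * (J Z)$c * (J W)$d * T a b c d)"
  show "\<forall>a b c d. T a b c d = (\<Sum>e\<in>UNIV. \<Sum>f\<in>UNIV. Jm c e * Jm d f * T a b e f)"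
  proof (intro allI)
    fix a b c d
    have "(\<Sum>a'\<in>UNIV. \<Sum>b'\<in>UNIV. \<Sum>c'\<in>UNIV. \<Sum>d'\<in>UNIV. axis a 1 $a' * axis b 1 $b' * axis c 1 $c' * axis d 1 $d' * T a' b' c' d')
       = (\<Sum>a'\<in>UNIV. \<Sum>b'\<in>UNIV. \<Sum>c'\<in>UNIV. \<Sum>d'\<in>UNIV. axis a 1 $a' * axis b 1 $b' * (J (axis c 1))$c' * (J (axis d 1))$d' * T a' b' c' d')"
      using H by blast
    moreover have je: "(J (axis c 1)) $ e = Jm c e" for c e
      by (simp add: J sum_axis)
    ultimately show "T a b c d = (\<Sum>e\<in>UNIV. \<Sum>f\<in>UNIV. Jm c e * Jm d f * T a b e f)"
      by (simp only: expand4 sum_axis je) (simp add: sum_distrib_left mult.assoc)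
  qed
next
  assume H: "\<forall>a b c d. T a b c d = (\<Sum>e\<in>UNIV. \<Sum>f\<in>UNIV. Jm c e * Jm d f * T a b e f)"
  show "\<forall>X Y Z W. (\<Sum>a\<in>UNIV. \<Sum>b\<in>UNIV. \<Sum>c\<in>UNIV. \<Sum>d\<in>UNIV. X$a * Y$b * Z$c * W$d * T a b c d)
            = (\<Sum>a\<in>UNIV. \<Sum>b\<in>UNIV. \<Sum>c\<in>UNIV. \<Sum>d\<in>UNIV. X$a * Y$b * (J Z)$c * (J W)$d * T a b c d)"
  proof (intro allI)
    fix X Y Z W :: "real^'a"
    have inner: "(\<Sum>c\<in>UNIV. \<Sum>d\<in>UNIV. X$a * Y$b * (J Z)$c * (J W)$d * T a b c d)
        = (\<Sum>c\<in>UNIV. \<Sum>d\<in>UNIV. X$a * Y$b * Z$c * W$d * T a b c d)" for a b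
    proof -
      have "(\<Sum>c\<in>UNIV. \<Sum>d\<in>UNIV. X$a * Y$b * (J Z)$c * (J W)$d * T a b c d)
          = (\<Sum>c\<in>UNIV. \<Sum>d\<in>UNIV. \<Sum>c'\<in>UNIV. \<Sum>d'\<in>UNIV. X$a * Y$b * Z$c' * W$d' * (Jm c' c * Jm d' d * T a b c d))"
        by (simp add: J sum_distrib_left sum_distrib_right mult_ac)
      also have "\<dots> = (\<Sum>c'\<in>UNIV. \<Sum>d'\<in>UNIV. \<Sum>c\<in>UNIV. \<Sum>d\<in>UNIV. X$a * Y$b * Z$c' * W$d' * (Jm c' c * Jm d' d * T a b c d))"
        by (rule perm4)
      also have "\<dots> = (\<Sum>c'\<in>UNIV. \<Sum>d'\<in>UNIV. X$a * Y$b * Z$c' * W$d' * (\<Sum>c\<in>UNIV. \<Sum>d\<in>UNIV. Jm c' c * Jm d' d * T a b c d))"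
        by (simp only: sum_distrib_left)
      also have "\<dots> = (\<Sum>c\<in>UNIV. \<Sum>d\<in>UNIV. X$a * Y$b * Z$c * W$d * T a b c d)"
        by (simp only: H[rule_format, symmetric])
      finally show ?thesis .
    qed
    show "(\<Sum>a\<in>UNIV. \<Sum>b\<in>UNIV. \<Sum>c\<in>UNIV. \<Sum>d\<in>UNIV. X$a * Y$b * Z$c * W$d * T a b c d)
            = (\<Sum>a\<in>UNIV. \<Sum>b\<in>UNIV. \<Sum>c\<in>UNIV. \<Sum>d\<in>UNIV. X$a * Y$b * (J Z)$c * (J W)$d * T a b c d)"
      by (simp only: inner)
  qed
qed


definition Jmat :: "(real^'n::finite \<Rightarrow> 'n \<Rightarrow> 'n \<Rightarrow> real) \<Rightarrow> (real^'n \<Rightarrow> 'n \<Rightarrow> real)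
   \<Rightarrow> (real^'n \<Rightarrow> 'n \<Rightarrow> real) \<Rightarrow> real^'n \<Rightarrow> 'n option \<Rightarrow> 'n option \<Rightarrow> real" where
  "Jmat phi xi eta x c e = (case (c, e) of (Some j, Some i) \<Rightarrow> phi x j i | (None, Some i) \<Rightarrow> xi x i
     | (Some j, None) \<Rightarrow> - eta x j | (None, None) \<Rightarrow> 0)"

lemma Jbar_eq: "Jbar phi xi eta q Z = (\<chi> e. \<Sum>c\<in>UNIV. Z$c * Jmat phi xi eta (mpart q) c e)"
  by (simp add: Jbar_def vec_eq_iff sum_option_UNIV Jmat_def sum_negf split: option.split)

theorem lemma1:
  fixes U :: "(real^'n::finite) set" and n :: nat
    and phi :: "real^'n \<Rightarrow> 'n \<Rightarrow> 'n \<Rightarrow> real"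
    and xi :: "real^'n \<Rightarrow> 'n \<Rightarrow> real" and eta :: "real^'n \<Rightarrow> 'n \<Rightarrow> real"
    and g :: "real^'n \<Rightarrow> 'n \<Rightarrow> 'n \<Rightarrow> real"
  assumes "open U"
    and "CARD('n) = 2 * n + 1"
    and "almost_contact_metric_on U phi xi eta g"
  shows "(\<forall>q\<in>prod_dom U. \<forall>X Y Z W.
            curv4 (gbar g) q X Y Z W = curv4 (gbar g) q X Y (Jbar phi xi eta q Z) (Jbar phi xi eta q W))
     \<longleftrightarrow>
     (\<forall>x\<in>U. \<forall>i j k l.
        curv g x i j k l - (\<Sum>c\<in>UNIV. \<Sum>d\<in>UNIV. phi x k c * phi x l d * curv g x i j c d)
          = g x i l * g x j k - g x j l * g x i k
            - (\<Sum>a\<in>UNIV. g x a l * phi x i a) * (\<Sum>a\<in>UNIV. g x a k * phi x j a)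
            + (\<Sum>a\<in>UNIV. g x a l * phi x j a) * (\<Sum>a\<in>UNIV. g x a k * phi x i a)
        \<and> (\<Sum>c\<in>UNIV. \<Sum>d\<in>UNIV. xi x c * phi x l d * curv g x i j c d)
          = eta x i * (\<Sum>a\<in>UNIV. g x a l * phi x j a) - eta x j * (\<Sum>a\<in>UNIV. g x a l * phi x i a))"
proof -
  interpret M: metric_setup U g
    using assms(1,3) by unfold_locales (simp_all add: almost_contact_metric_on_def)
  let ?J = "Jmat phi xi eta"
  let ?Cond = "\<lambda>x. \<forall>a b c d. M.Sg x a b c d = (\<Sum>e\<in>UNIV. \<Sum>f\<in>UNIV. ?J x c e * ?J x d f * M.Sg x a b e f)"
  have step1: "(\<forall>X Y Z W. curv4 (gbar g) q X Y Z W = curv4 (gbar g) q X Y (Jbar phi xi eta q Z) (Jbar phi xi eta q W))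
      \<longleftrightarrow> (\<forall>a b c d. curv (gbar g) q a b c d = (\<Sum>e\<in>UNIV. \<Sum>f\<in>UNIV. ?J (mpart q) c e * ?J (mpart q) d f * curv (gbar g) q a b e f))"
    for q unfolding curv4_def by (rule multilin_iff) (rule Jbar_eq)
  have step2: "(\<forall>a b c d. curv (gbar g) q a b c d = (\<Sum>e\<in>UNIV. \<Sum>f\<in>UNIV. ?J (mpart q) c e * ?J (mpart q) d f * curv (gbar g) q a b e f))
      \<longleftrightarrow> ?Cond (mpart q)" if q: "q \<in> prod_dom U" for q
  proof -
    have qU: "mpart q \<in> U" using q by (simp add: prod_dom_def)
    have "(\<Sum>e\<in>UNIV. \<Sum>f\<in>UNIV. ?J (mpart q) c e * ?J (mpart q) d f * (exp (-2 * tpart q) * M.Sg (mpart q) a b e f))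
        = exp (-2 * tpart q) * (\<Sum>e\<in>UNIV. \<Sum>f\<in>UNIV. ?J (mpart q) c e * ?J (mpart q) d f * M.Sg (mpart q) a b e f)"
      for a b c d by (simp add: sum_distrib_left mult_ac)
    then show ?thesis by (simp add: M.curv_gbar[OF qU])
  qed
  have step3: "(\<forall>q\<in>prod_dom U. ?Cond (mpart q)) \<longleftrightarrow> (\<forall>x\<in>U. ?Cond x)"
  proof
    assume H: "\<forall>q\<in>prod_dom U. ?Cond (mpart q)"
    show "\<forall>x\<in>U. ?Cond x"
    proof
      fix x assume x: "x \<in> U"
      let ?q = "(\<chi> a. case a of Some i \<Rightarrow> x $ i | None \<Rightarrow> 0) :: real^'n option"
      have mq: "mpart ?q = x" by (simp add: mpart_def vec_eq_iff)
      then have qd: "?q \<in> prod_dom U" using x by (simp add: prod_dom_def)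
      show "?Cond x" using bspec[OF H qd] unfolding mq .
    qed
  next
    assume H: "\<forall>x\<in>U. ?Cond x"
    show "\<forall>q\<in>prod_dom U. ?Cond (mpart q)"
    proof
      fix q assume "q \<in> prod_dom U"
      then have "mpart q \<in> U" by (simp add: prod_dom_def)
      then show "?Cond (mpart q)" by (rule bspec[OF H])
    qed
  qed
  have step45: "?Cond x \<longleftrightarrow> (\<forall>i j k l.
        curv g x i j k l - (\<Sum>c\<in>UNIV. \<Sum>d\<in>UNIV. phi x k c * phi x l d * curv g x i j c d)
          = g x i l * g x j k - g x j l * g x i k
            - (\<Sum>a\<in>UNIV. g x a l * phi x i a) * (\<Sum>a\<in>UNIV. g x a k * phi x j a)
            + (\<Sum>a\<in>UNIV. g x a l * phi x j a) * (\<Sum>a\<in>UNIV. g x a k * phi x i a)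
        \<and> (\<Sum>c\<in>UNIV. \<Sum>d\<in>UNIV. xi x c * phi x l d * curv g x i j c d)
          = eta x i * (\<Sum>a\<in>UNIV. g x a l * phi x j a) - eta x j * (\<Sum>a\<in>UNIV. g x a l * phi x i a))"
    (is "_ \<longleftrightarrow> ?RHS") if x: "x \<in> U" for x
  proof -
    interpret A: acm_alg "phi x" "xi x" "eta x" "g x"
      using assms(3) x M.g_sym[OF x] unfolding almost_contact_metric_on_def
      by unfold_locales blast+
    let ?S = "A.S4 (curv g x)"
    have Sg_S: "M.Sg x (Some i) (Some j) (Some k) (Some l) = ?S i j k l" for i j k l
      by (simp add: M.Sg_def A.S4_def)
    have "?Cond x \<longleftrightarrow> (\<forall>i j k l. ?S i j k l = (\<Sum>e\<in>UNIV. \<Sum>f\<in>UNIV. phi x k e * phi x l f * ?S i j e f)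
        \<and> 0 = (\<Sum>e\<in>UNIV. \<Sum>f\<in>UNIV. phi x k e * xi x f * ?S i j e f)
        \<and> 0 = (\<Sum>e\<in>UNIV. \<Sum>f\<in>UNIV. xi x e * phi x l f * ?S i j e f)
        \<and> 0 = (\<Sum>e\<in>UNIV. \<Sum>f\<in>UNIV. xi x e * xi x f * ?S i j e f))"
      (is "_ \<longleftrightarrow> (\<forall>i j k l. ?Q i j k l)")
    proof -
      have sumJ: "(\<Sum>e\<in>UNIV. \<Sum>f\<in>UNIV. ?J x c e * ?J x d f * M.Sg x (Some i) (Some j) e f)
          = (\<Sum>e\<in>UNIV. \<Sum>f\<in>UNIV. ?J x c (Some e) * ?J x d (Some f) * ?S i j e f)" for c d i j
        by (simp add: sum_option_UNIV M.Sg_def A.S4_def)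
      have Sg0: "M.Sg x a b c d = 0" if "a = None \<or> b = None \<or> c = None \<or> d = None" for a b c d
        using that by (auto simp: M.Sg_def split: option.splits)
      have JS: "?J x (Some k) (Some e) = phi x k e" "?J x None (Some e) = xi x e" for k e
        by (simp_all add: Jmat_def)
      show ?thesis
      proof
        assume C: "?Cond x"
        show "\<forall>i j k l. ?Q i j k l"
        proof (intro allI)
          fix i j k l
          have c1: "M.Sg x (Some i) (Some j) (Some k) (Some l) = (\<Sum>e\<in>UNIV. \<Sum>f\<in>UNIV. ?J x (Some k) e * ?J x (Some l) f * M.Sg x (Some i) (Some j) e f)"
            using C by blast
          have c2: "M.Sg x (Some i) (Some j) (Some k) None = (\<Sum>e\<in>UNIV. \<Sum>f\<in>UNIV. ?J x (Some k) e * ?J x None f * M.Sg x (Some i) (Some j) e f)"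
            using C by blast
          have c3: "M.Sg x (Some i) (Some j) None (Some l) = (\<Sum>e\<in>UNIV. \<Sum>f\<in>UNIV. ?J x None e * ?J x (Some l) f * M.Sg x (Some i) (Some j) e f)"
            using C by blast
          have c4: "M.Sg x (Some i) (Some j) None None = (\<Sum>e\<in>UNIV. \<Sum>f\<in>UNIV. ?J x None e * ?J x None f * M.Sg x (Some i) (Some j) e f)"
            using C by blast
          show "?Q i j k l"
            using c1 c2 c3 c4 unfolding sumJ JS Sg_S Sg0[of None] Sg0[of _ None] by (simp add: Sg0)
        qed
      next
        assume Q: "\<forall>i j k l. ?Q i j k l"
        show "?Cond x"
        proof (intro allI)
          fix a b c d
          show "M.Sg x a b c d = (\<Sum>e\<in>UNIV. \<Sum>f\<in>UNIV. ?J x c e * ?J x d f * M.Sg x a b e f)"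
          proof (cases "a = None \<or> b = None")
            case True
            have z: "M.Sg x a b e f = 0" for e f using Sg0 True by blast
            then show ?thesis by simp
          next
            case False
            then obtain i j where ab: "a = Some i" "b = Some j" by auto
            show ?thesis
            proof (cases c; cases d)
              fix k l assume cd: "c = Some k" "d = Some l"
              show ?thesis using Q unfolding ab cd sumJ JS Sg_S by blast
            next
              fix k assume cd: "c = Some k" "d = None"
              have "0 = (\<Sum>e\<in>UNIV. \<Sum>f\<in>UNIV. phi x k e * xi x f * ?S i j e f)" using Q by blast
              then show ?thesis unfolding ab cd sumJ JS by (simp add: Sg0)
            next
              fix l assume cd: "c = None" "d = Some l"
              have "0 = (\<Sum>e\<in>UNIV. \<Sum>f\<in>UNIV. xi x e * phi x l f * ?S i j e f)" using Q by blast
              then show ?thesis unfolding ab cd sumJ JS by (simp add: Sg0)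
            next
              assume cd: "c = None" "d = None"
              have "0 = (\<Sum>e\<in>UNIV. \<Sum>f\<in>UNIV. xi x e * xi x f * ?S i j e f)" using Q by blast
              then show ?thesis unfolding ab cd sumJ JS by (simp add: Sg0)
            qed
          qed
        qed
      qed
    qed
    also have "\<dots> \<longleftrightarrow> ?RHS"
      by (rule A.alg_iff[unfolded A.P_def])
    finally show ?thesis .
  qed
  have e1: "(\<forall>q\<in>prod_dom U. \<forall>X Y Z W.
            curv4 (gbar g) q X Y Z W = curv4 (gbar g) q X Y (Jbar phi xi eta q Z) (Jbar phi xi eta q W))
      \<longleftrightarrow> (\<forall>q\<in>prod_dom U. ?Cond (mpart q))"
  proof (rule ball_cong[OF refl])
    fix q assume "q \<in> prod_dom U"
    then show "(\<forall>X Y Z W. curv4 (gbar g) q X Y Z W = curv4 (gbar g) q X Y (Jbar phi xi eta q Z) (Jbar phi xi eta q W))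
      \<longleftrightarrow> ?Cond (mpart q)" by (rule trans[OF step1 step2])
  qed
  have e3: "(\<forall>x\<in>U. ?Cond x) \<longleftrightarrow> (\<forall>x\<in>U. \<forall>i j k l.
        curv g x i j k l - (\<Sum>c\<in>UNIV. \<Sum>d\<in>UNIV. phi x k c * phi x l d * curv g x i j c d)
          = g x i l * g x j k - g x j l * g x i k
            - (\<Sum>a\<in>UNIV. g x a l * phi x i a) * (\<Sum>a\<in>UNIV. g x a k * phi x j a)
            + (\<Sum>a\<in>UNIV. g x a l * phi x j a) * (\<Sum>a\<in>UNIV. g x a k * phi x i a)
        \<and> (\<Sum>c\<in>UNIV. \<Sum>d\<in>UNIV. xi x c * phi x l d * curv g x i j c d)
          = eta x i * (\<Sum>a\<in>UNIV. g x a l * phi x j a) - eta x j * (\<Sum>a\<in>UNIV. g x a l * phi x i a))"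
    by (rule ball_cong[OF refl]) (rule step45)
  show ?thesis by (rule trans[OF e1 trans[OF step3 e3]])
qed

end
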